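(* Let $(Y,\lambda)$ be a Landsberg contact manifold, with contact canonical frame $\{R,X_1,X_2\}$ and functions $I,J,K$ where $J\equiv0$. Let $\psi$ be a flow line of the vector field $X_2$ and write $K(t)=K\circ\psi(t)$, $I(t)=I\circ\psi(t)$. Then $$K(t)=K(0)\,e^{-\int_0^t I(\tau)\,d\tau}.$$ In particular, if $y\colon\mathbb{R}/T\mathbb{Z}\to Y$ is a periodic orbit of $X_2$ such that $K(T)=K(0)\neq0$ (with $K(t)=K\circ y(t)$), then $\int_0^T I\circ y(\tau)\,d\tau=0$.
   Context: For a contact form $\lambda$ on a closed $3$-manifold $Y$ with Reeb vector field $R$, a contact canonical frame is a pair of vector fields $X_1,X_2$ tangent to $\ker\lambda$ together with smooth functions $I,J,K\colon Y\to\mathbb{R}$ such that $[X_2,R]=X_1$, $[X_1,X_2]=R+IX_1+JX_2$, $[R,X_1]=KX_2$. $(Y,\lambda)$ is called a Landsberg contact manifold if it admits a contact canonical frame with $J\equiv 0$. *)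

theory Defs
  imports "HOL-Analysis.Analysis" "HOL-Probability.Probability"
begin

text \<open>Closed manifolds are modelled (via the Whitney embedding theorem) as compact
smooth embedded submanifolds of a Euclidean space.\<close>

fun ck_on :: "nat \<Rightarrow> 'a::euclidean_space set \<Rightarrow> ('a \<Rightarrow> 'b::real_normed_vector) \<Rightarrow> bool" where
  "ck_on 0 U f = continuous_on U f"
| "ck_on (Suc k) U f = ((\<forall>x\<in>U. f differentiable (at x)) \<and>
      (\<forall>v. ck_on k U (\<lambda>x. frechet_derivative f (at x) v)))"

definition smooth_on :: "'a::euclidean_space set \<Rightarrow> ('a \<Rightarrow> 'b::real_normed_vector) \<Rightarrow> bool" where
  "smooth_on U f \<longleftrightarrow> open U \<and> (\<forall>k. ck_on k U f)"

definition submanifold :: "nat \<Rightarrow> 'a::euclidean_space set \<Rightarrow> bool" where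
  "submanifold d M \<longleftrightarrow> (\<forall>p\<in>M. \<exists>U V (\<phi>::'a\<Rightarrow>'a) \<psi> B. open U \<and> p \<in> U \<and> open V \<and>
      smooth_on U \<phi> \<and> smooth_on V \<psi> \<and> \<phi> ` U = V \<and> (\<forall>x\<in>U. \<psi> (\<phi> x) = x) \<and>
      (\<forall>y\<in>V. \<phi> (\<psi> y) = y) \<and> B \<subseteq> Basis \<and> card B = d \<and> \<phi> ` (U \<inter> M) = V \<inter> span B)"

definition closed_manifold :: "nat \<Rightarrow> 'a::euclidean_space set \<Rightarrow> bool" where
  "closed_manifold d M \<longleftrightarrow> compact M \<and> submanifold d M"

definition smooth_fun :: "'a::euclidean_space set \<Rightarrow> ('a \<Rightarrow> 'b::real_normed_vector) \<Rightarrow> bool" where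
  "smooth_fun M f \<longleftrightarrow> (\<forall>p\<in>M. \<exists>U g. p \<in> U \<and> smooth_on U g \<and> (\<forall>x\<in>U \<inter> M. g x = f x))"

definition tangent_space :: "'a::euclidean_space set \<Rightarrow> 'a \<Rightarrow> 'a set" where
  "tangent_space M p = {v. \<exists>\<gamma>. (\<forall>t. \<gamma> t \<in> M) \<and> \<gamma> 0 = p \<and> (\<gamma> has_vector_derivative v) (at 0)}"

definition vector_field :: "'a::euclidean_space set \<Rightarrow> ('a \<Rightarrow> 'a) \<Rightarrow> bool" where
  "vector_field M X \<longleftrightarrow> smooth_fun M X \<and> (\<forall>p\<in>M. X p \<in> tangent_space M p)"

definition dir_deriv :: "'a::euclidean_space set \<Rightarrow> ('a \<Rightarrow> 'b::real_normed_vector) \<Rightarrow> 'a \<Rightarrow> 'a \<Rightarrow> 'b" where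
  "dir_deriv M f p v = frechet_derivative
     (SOME g. \<exists>U. p \<in> U \<and> smooth_on U g \<and> (\<forall>x\<in>U \<inter> M. g x = f x)) (at p) v"

definition lie_bracket :: "'a::euclidean_space set \<Rightarrow> ('a \<Rightarrow> 'a) \<Rightarrow> ('a \<Rightarrow> 'a) \<Rightarrow> 'a \<Rightarrow> 'a" where
  "lie_bracket M X Z p = dir_deriv M Z p (X p) - dir_deriv M X p (Z p)"

text \<open>A 1-form lambda on M is represented by a smooth map alpha: lambda_p(v) = alpha(p) . v
for tangent vectors v.  Its exterior derivative at p:\<close>
definition form_d :: "'a::euclidean_space set \<Rightarrow> ('a \<Rightarrow> 'a) \<Rightarrow> 'a \<Rightarrow> 'a \<Rightarrow> 'a \<Rightarrow> real" where
  "form_d M \<alpha> p u v = dir_deriv M \<alpha> p u \<bullet> v - dir_deriv M \<alpha> p v \<bullet> u"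

text \<open>(lambda wedge d lambda)_p (u,v,w)\<close>
definition contact_vol :: "'a::euclidean_space set \<Rightarrow> ('a \<Rightarrow> 'a) \<Rightarrow> 'a \<Rightarrow> 'a \<Rightarrow> 'a \<Rightarrow> 'a \<Rightarrow> real" where
  "contact_vol M \<alpha> p u v w =
     (\<alpha> p \<bullet> u) * form_d M \<alpha> p v w - (\<alpha> p \<bullet> v) * form_d M \<alpha> p u w + (\<alpha> p \<bullet> w) * form_d M \<alpha> p u v"

definition contact_form :: "'a::euclidean_space set \<Rightarrow> ('a \<Rightarrow> 'a) \<Rightarrow> bool" where
  "contact_form M \<alpha> \<longleftrightarrow> smooth_fun M \<alpha> \<and>
     (\<forall>p\<in>M. \<exists>u\<in>tangent_space M p. \<exists>v\<in>tangent_space M p. \<exists>w\<in>tangent_space M p.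
        contact_vol M \<alpha> p u v w \<noteq> 0)"

definition reeb_field :: "'a::euclidean_space set \<Rightarrow> ('a \<Rightarrow> 'a) \<Rightarrow> ('a \<Rightarrow> 'a) \<Rightarrow> bool" where
  "reeb_field M \<alpha> R \<longleftrightarrow> vector_field M R \<and>
     (\<forall>p\<in>M. \<alpha> p \<bullet> R p = 1 \<and> (\<forall>v\<in>tangent_space M p. form_d M \<alpha> p (R p) v = 0))"

definition contact_canonical_frame ::
  "'a::euclidean_space set \<Rightarrow> ('a \<Rightarrow> 'a) \<Rightarrow> ('a \<Rightarrow> 'a) \<Rightarrow> ('a \<Rightarrow> 'a) \<Rightarrow> ('a \<Rightarrow> 'a)
    \<Rightarrow> ('a \<Rightarrow> real) \<Rightarrow> ('a \<Rightarrow> real) \<Rightarrow> ('a \<Rightarrow> real) \<Rightarrow> bool" where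
  "contact_canonical_frame M \<alpha> R X1 X2 I J K \<longleftrightarrow>
     vector_field M X1 \<and> vector_field M X2 \<and> smooth_fun M I \<and> smooth_fun M J \<and> smooth_fun M K \<and>
     (\<forall>p\<in>M. \<alpha> p \<bullet> X1 p = 0 \<and> \<alpha> p \<bullet> X2 p = 0 \<and>
        lie_bracket M X2 R p = X1 p \<and>
        lie_bracket M X1 X2 p = R p + I p *\<^sub>R X1 p + J p *\<^sub>R X2 p \<and>
        lie_bracket M R X1 p = K p *\<^sub>R X2 p)"

definition flow_line :: "'a::euclidean_space set \<Rightarrow> ('a \<Rightarrow> 'a) \<Rightarrow> (real \<Rightarrow> 'a) \<Rightarrow> bool" where
  "flow_line M X \<psi> \<longleftrightarrow> (\<forall>t. \<psi> t \<in> M \<and> (\<psi> has_vector_derivative X (\<psi> t)) (at t))"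

end

theory Submission
  imports Defs
begin


abbreviation DD :: "('a::euclidean_space \<Rightarrow> 'b::real_normed_vector) \<Rightarrow> 'a \<Rightarrow> 'a \<Rightarrow> 'b" where
  "DD f x v \<equiv> frechet_derivative f (at x) v"

lemma DD_has: "f differentiable (at x) \<Longrightarrow> (f has_derivative DD f x) (at x)"
  using frechet_derivative_works by blast

lemma DD_linear: "f differentiable (at x) \<Longrightarrow> linear (DD f x)"
  using DD_has has_derivative_linear by blast

lemma DD_eq: "(f has_derivative f') (at x) \<Longrightarrow> DD f x v = f' v"
  using frechet_derivative_at by metis

lemma tan_deriv_zero:
  fixes H :: "'a::euclidean_space \<Rightarrow> 'b::real_normed_vector"
  assumes W: "open W" "p \<in> W" and H0: "\<forall>x\<in>W\<inter>M. H x = 0" and Hd: "H differentiable (at p)"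
    and v: "v \<in> tangent_space M p"
  shows "DD H p v = 0"
proof -
  obtain \<gamma> where g: "\<forall>t. \<gamma> t \<in> M" "\<gamma> 0 = p" "(\<gamma> has_vector_derivative v) (at 0)"
    using v unfolding tangent_space_def by blast
  have gd: "(\<gamma> has_derivative (\<lambda>t. t *\<^sub>R v)) (at 0)"
    using g(3) unfolding has_vector_derivative_def .
  have comp: "((\<lambda>t. H (\<gamma> t)) has_derivative (\<lambda>t. DD H p (t *\<^sub>R v))) (at 0)"
    using has_derivative_compose[OF gd, of H "DD H p"] DD_has[OF Hd] g(2) by simp
  have "isCont \<gamma> 0" using g(3) by (simp add: has_vector_derivative_continuous)
  obtain e where e: "e > 0" "ball p e \<subseteq> W" using W by (meson openE)
  obtain d where d: "d > 0" "\<forall>t. dist t 0 < d \<longrightarrow> dist (\<gamma> t) (\<gamma> 0) < e"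
    using \<open>isCont \<gamma> 0\<close> e(1) unfolding continuous_at_eps_delta by blast
  have d2: "\<forall>t. dist t 0 < d \<longrightarrow> \<gamma> t \<in> W"
    using d(2) e(2) g(2) by (auto simp: dist_commute subset_iff)
  have z: "((\<lambda>_. 0) has_derivative (\<lambda>t. DD H p (t *\<^sub>R v))) (at 0)"
    apply (rule has_derivative_transform_within[OF comp d(1)])
    using d2 H0 g(1) by auto
  have "(\<lambda>t. DD H p (t *\<^sub>R v)) = (\<lambda>_. 0)"
    using has_derivative_unique[OF z has_derivative_const] .
  then show ?thesis by (metis scaleR_one)
qed

lemma tan_deriv_eq:
  fixes F G :: "'a::euclidean_space \<Rightarrow> 'b::real_normed_vector"
  assumes W: "open W" "p \<in> W" and E: "\<forall>x\<in>W\<inter>M. F x = G x"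
    and Fd: "F differentiable (at p)" and Gd: "G differentiable (at p)"
    and v: "v \<in> tangent_space M p"
  shows "DD F p v = DD G p v"
proof -
  have hd: "((\<lambda>x. F x - G x) has_derivative (\<lambda>w. DD F p w - DD G p w)) (at p)"
    using DD_has[OF Fd] DD_has[OF Gd] by (rule has_derivative_diff)
  have "DD (\<lambda>x. F x - G x) p v = 0"
    apply (rule tan_deriv_zero[OF W _ _ v]) using E apply auto[1]
    using hd differentiableI by blast
  then show ?thesis using DD_eq[OF hd] by simp
qed



lemma smooth_props:
  assumes "smooth_on U g"
  shows "open U" "\<forall>x\<in>U. g differentiable (at x)"
    "\<forall>u. \<forall>x\<in>U. (\<lambda>y. DD g y u) differentiable (at x)"
    "\<forall>u v. \<forall>x\<in>U. (\<lambda>y. DD (\<lambda>z. DD g z u) y v) differentiable (at x)"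
proof -
  have c: "ck_on 3 U g" using assms unfolding smooth_on_def by blast
  show "open U" using assms unfolding smooth_on_def by blast
  show "\<forall>x\<in>U. g differentiable (at x)"
    "\<forall>u. \<forall>x\<in>U. (\<lambda>y. DD g y u) differentiable (at x)"
    "\<forall>u v. \<forall>x\<in>U. (\<lambda>y. DD (\<lambda>z. DD g z u) y v) differentiable (at x)"
    using c by (simp_all add: numeral_3_eq_3)
qed

lemma line_deriv:
  fixes F :: "'a::euclidean_space \<Rightarrow> 'b::euclidean_space"
  assumes "F differentiable (at (a + s *\<^sub>R u))"
  shows "((\<lambda>s. F (a + s *\<^sub>R u) \<bullet> e) has_real_derivative (DD F (a + s *\<^sub>R u) u \<bullet> e)) (at s)"
proof -
  have l: "((\<lambda>s. a + s *\<^sub>R u) has_derivative (\<lambda>h. h *\<^sub>R u)) (at s)"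
    by (auto intro!: derivative_eq_intros)
  have c: "((\<lambda>s. F (a + s *\<^sub>R u)) has_derivative (\<lambda>h. DD F (a + s *\<^sub>R u) (h *\<^sub>R u))) (at s)"
    using has_derivative_compose[OF l DD_has[OF assms]] by simp
  have i: "((\<lambda>s. F (a + s *\<^sub>R u) \<bullet> e) has_derivative (\<lambda>h. DD F (a + s *\<^sub>R u) (h *\<^sub>R u) \<bullet> e)) (at s)"
    using has_derivative_inner_left[OF c] .
  have lin: "linear (DD F (a + s *\<^sub>R u))" using DD_linear[OF assms] .
  show ?thesis
    apply (rule has_derivative_imp_has_field_derivative[OF i])
    using lin by (simp add: linear_scale)
qed

lemma delta_mvt:
  fixes A :: "'a::euclidean_space \<Rightarrow> 'b::euclidean_space"
  assumes d1: "\<forall>x\<in>U. A differentiable (at x)"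
    and d2: "\<forall>x\<in>U. (\<lambda>y. DD A y u) differentiable (at x)"
    and inU: "\<forall>s\<in>{0..h}. \<forall>t\<in>{0..h}. p + s *\<^sub>R u + t *\<^sub>R v \<in> U" and h: "h > 0"
  shows "\<exists>\<xi> \<eta>. 0 < \<xi> \<and> \<xi> < h \<and> 0 < \<eta> \<and> \<eta> < h \<and>
     A (p + h *\<^sub>R u + h *\<^sub>R v) \<bullet> e - A (p + h *\<^sub>R u) \<bullet> e - A (p + h *\<^sub>R v) \<bullet> e + A p \<bullet> e
       = h * h * (DD (\<lambda>z. DD A z u) (p + \<xi> *\<^sub>R u + \<eta> *\<^sub>R v) v \<bullet> e)"
proof -
  define \<phi> where "\<phi> s = A ((p + h *\<^sub>R v) + s *\<^sub>R u) \<bullet> e - A (p + s *\<^sub>R u) \<bullet> e" for s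
  have "\<exists>z. 0 < z \<and> z < h \<and> \<phi> h - \<phi> 0 = (h - 0) *
      (DD A ((p + h *\<^sub>R v) + z *\<^sub>R u) u \<bullet> e - DD A (p + z *\<^sub>R u) u \<bullet> e)"
    unfolding \<phi>_def
  proof (rule MVT2[OF h])
    fix x assume x: "0 \<le> x" "x \<le> h"
    have "p + h *\<^sub>R v + x *\<^sub>R u = p + x *\<^sub>R u + h *\<^sub>R v" by (simp add: algebra_simps)
    moreover have "p + x *\<^sub>R u + h *\<^sub>R v \<in> U" using inU x h by auto
    ultimately have a1: "A differentiable (at (p + h *\<^sub>R v + x *\<^sub>R u))"
      using d1 by metis
    have a2: "A differentiable (at (p + x *\<^sub>R u))"
      using d1 inU[rule_format, of x 0] x h by auto
    show "((\<lambda>s. A (p + h *\<^sub>R v + s *\<^sub>R u) \<bullet> e - A (p + s *\<^sub>R u) \<bullet> e) has_real_derivative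
        (DD A (p + h *\<^sub>R v + x *\<^sub>R u) u \<bullet> e - DD A (p + x *\<^sub>R u) u \<bullet> e)) (at x)"
      by (rule DERIV_diff[OF line_deriv[OF a1] line_deriv[OF a2]])
  qed
  then obtain \<xi> where xi: "0 < \<xi>" "\<xi> < h" and
    e1: "\<phi> h - \<phi> 0 = h * (DD A ((p + \<xi> *\<^sub>R u) + h *\<^sub>R v) u \<bullet> e - DD A ((p + \<xi> *\<^sub>R u) + 0 *\<^sub>R v) u \<bullet> e)"
    by (auto simp: algebra_simps)
  define F where "F = (\<lambda>y. DD A y u)"
  have "\<exists>z. 0 < z \<and> z < h \<and> F ((p + \<xi> *\<^sub>R u) + h *\<^sub>R v) \<bullet> e - F ((p + \<xi> *\<^sub>R u) + 0 *\<^sub>R v) \<bullet> e = (h - 0) *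
      (DD F ((p + \<xi> *\<^sub>R u) + z *\<^sub>R v) v \<bullet> e)"
  proof (rule MVT2[OF h])
    fix x assume x: "0 \<le> x" "x \<le> h"
    have a1: "F differentiable (at (p + \<xi> *\<^sub>R u + x *\<^sub>R v))"
      unfolding F_def using d2 inU x xi by auto
    show "((\<lambda>s. F (p + \<xi> *\<^sub>R u + s *\<^sub>R v) \<bullet> e) has_real_derivative
        (DD F (p + \<xi> *\<^sub>R u + x *\<^sub>R v) v \<bullet> e)) (at x)"
      by (rule line_deriv[OF a1])
  qed
  then obtain \<eta> where eta: "0 < \<eta>" "\<eta> < h" and
    e2: "F ((p + \<xi> *\<^sub>R u) + h *\<^sub>R v) \<bullet> e - F ((p + \<xi> *\<^sub>R u) + 0 *\<^sub>R v) \<bullet> e = h * (DD F ((p + \<xi> *\<^sub>R u) + \<eta> *\<^sub>R v) v \<bullet> e)"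
    by auto
  have "\<phi> h - \<phi> 0 = A (p + h *\<^sub>R u + h *\<^sub>R v) \<bullet> e - A (p + h *\<^sub>R u) \<bullet> e - A (p + h *\<^sub>R v) \<bullet> e + A p \<bullet> e"
    unfolding \<phi>_def by (simp add: algebra_simps)
  moreover have "\<phi> h - \<phi> 0 = h * h * (DD F (p + \<xi> *\<^sub>R u + \<eta> *\<^sub>R v) v \<bullet> e)"
    using e1 e2 unfolding F_def by simp
  ultimately show ?thesis using xi eta unfolding F_def by metis
qed



lemma small_step:
  fixes u v :: "'a::real_normed_vector"
  assumes m: "m > 0" and h_def: "h = m / (2 * (norm u + norm v + 1))"
  shows "h > 0" "\<forall>s\<in>{0..h}. \<forall>t\<in>{0..h}. dist (p + s *\<^sub>R u + t *\<^sub>R v) p < m"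
proof -
  have n: "norm u + norm v + 1 > 0" by (simp add: add_nonneg_pos)
  show hp: "h > 0" unfolding h_def using m n by simp
  have hm: "h * (norm u + norm v + 1) = m / 2" unfolding h_def using n by (simp add: field_simps)
  show "\<forall>s\<in>{0..h}. \<forall>t\<in>{0..h}. dist (p + s *\<^sub>R u + t *\<^sub>R v) p < m"
  proof (intro ballI)
    fix s t assume st: "s \<in> {0..h}" "t \<in> {0..h}"
    have "dist (p + s *\<^sub>R u + t *\<^sub>R v) p = norm (s *\<^sub>R u + t *\<^sub>R v)"
      by (simp add: dist_norm)
    also have "\<dots> \<le> norm (s *\<^sub>R u) + norm (t *\<^sub>R v)" by (rule norm_triangle_ineq)
    also have "\<dots> = s * norm u + t * norm v" using st by simp
    also have "\<dots> \<le> h * norm u + h * norm v"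
      using st by (intro add_mono mult_right_mono) auto
    also have "\<dots> < h * (norm u + norm v + 1)"
      using hp by (simp add: distrib_left)
    also have "\<dots> < m" using hm m by simp
    finally show "dist (p + s *\<^sub>R u + t *\<^sub>R v) p < m" .
  qed
qed

lemma schwarz:
  fixes A :: "'a::euclidean_space \<Rightarrow> 'b::euclidean_space"
  assumes U: "open U" "p \<in> U"
    and d1: "\<forall>x\<in>U. A differentiable (at x)"
    and d2: "\<forall>u. \<forall>x\<in>U. (\<lambda>y. DD A y u) differentiable (at x)"
    and d3: "\<forall>u v. isCont (\<lambda>y. DD (\<lambda>z. DD A z u) y v) p"
  shows "DD (\<lambda>y. DD A y u) p v = DD (\<lambda>y. DD A y v) p u"
proof (rule euclidean_eqI)
  fix e :: 'b assume "e \<in> Basis"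
  define c1 where "c1 y = DD (\<lambda>z. DD A z u) y v \<bullet> e" for y
  define c2 where "c2 y = DD (\<lambda>z. DD A z v) y u \<bullet> e" for y
  have cc1: "isCont c1 p" unfolding c1_def using d3 by (intro continuous_intros) auto
  have cc2: "isCont c2 p" unfolding c2_def using d3 by (intro continuous_intros) auto
  have "\<bar>c1 p - c2 p\<bar> < 2 * \<epsilon>" if eps: "\<epsilon> > 0" for \<epsilon>
  proof -
    obtain r where r: "r > 0" "ball p r \<subseteq> U" using U by (meson openE)
    obtain \<delta>1 where de1: "\<delta>1 > 0" "\<forall>y. dist y p < \<delta>1 \<longrightarrow> dist (c1 y) (c1 p) < \<epsilon>"
      using cc1 eps unfolding continuous_at_eps_delta by blast
    obtain \<delta>2 where de2: "\<delta>2 > 0" "\<forall>y. dist y p < \<delta>2 \<longrightarrow> dist (c2 y) (c2 p) < \<epsilon>"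
      using cc2 eps unfolding continuous_at_eps_delta by blast
    define m where "m = min r (min \<delta>1 \<delta>2)"
    have m: "m > 0" unfolding m_def using r de1 de2 by simp
    define h where "h = m / (2 * (norm u + norm v + 1))"
    have h: "h > 0" and cl: "\<forall>s\<in>{0..h}. \<forall>t\<in>{0..h}. dist (p + s *\<^sub>R u + t *\<^sub>R v) p < m"
      using small_step(1)[OF m h_def] small_step(2)[OF m h_def, where p=p] by auto
    have cl2: "\<forall>s\<in>{0..h}. \<forall>t\<in>{0..h}. dist (p + s *\<^sub>R v + t *\<^sub>R u) p < m"
    proof (intro ballI)
      fix s t assume "s \<in> {0..h}" "t \<in> {0..h}"
      then have "dist (p + t *\<^sub>R u + s *\<^sub>R v) p < m" using cl by auto
      then show "dist (p + s *\<^sub>R v + t *\<^sub>R u) p < m" by (simp add: algebra_simps)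
    qed
    have inU: "\<forall>s\<in>{0..h}. \<forall>t\<in>{0..h}. p + s *\<^sub>R u + t *\<^sub>R v \<in> U"
      using cl r(2) unfolding m_def by (force simp: dist_commute)
    have inU2: "\<forall>s\<in>{0..h}. \<forall>t\<in>{0..h}. p + s *\<^sub>R v + t *\<^sub>R u \<in> U"
      using cl2 r(2) unfolding m_def by (force simp: dist_commute)
    obtain \<xi>1 \<eta>1 where q1: "0 < \<xi>1" "\<xi>1 < h" "0 < \<eta>1" "\<eta>1 < h" and
      D1: "A (p + h *\<^sub>R u + h *\<^sub>R v) \<bullet> e - A (p + h *\<^sub>R u) \<bullet> e - A (p + h *\<^sub>R v) \<bullet> e + A p \<bullet> e
       = h * h * c1 (p + \<xi>1 *\<^sub>R u + \<eta>1 *\<^sub>R v)"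
      using delta_mvt[OF d1 spec[OF d2] inU h, of e] unfolding c1_def by blast
    obtain \<xi>2 \<eta>2 where q2: "0 < \<xi>2" "\<xi>2 < h" "0 < \<eta>2" "\<eta>2 < h" and
      D2: "A (p + h *\<^sub>R v + h *\<^sub>R u) \<bullet> e - A (p + h *\<^sub>R v) \<bullet> e - A (p + h *\<^sub>R u) \<bullet> e + A p \<bullet> e
       = h * h * c2 (p + \<xi>2 *\<^sub>R v + \<eta>2 *\<^sub>R u)"
      using delta_mvt[OF d1 spec[OF d2] inU2 h, of e] unfolding c2_def by blast
    have "p + h *\<^sub>R v + h *\<^sub>R u = p + h *\<^sub>R u + h *\<^sub>R v" by (simp add: algebra_simps)
    then have pe: "A (p + h *\<^sub>R v + h *\<^sub>R u) \<bullet> e = A (p + h *\<^sub>R u + h *\<^sub>R v) \<bullet> e" by metis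
    have "h * h * c1 (p + \<xi>1 *\<^sub>R u + \<eta>1 *\<^sub>R v) = h * h * c2 (p + \<xi>2 *\<^sub>R v + \<eta>2 *\<^sub>R u)"
      using D1 D2 pe by linarith
    then have eq: "c1 (p + \<xi>1 *\<^sub>R u + \<eta>1 *\<^sub>R v) = c2 (p + \<xi>2 *\<^sub>R v + \<eta>2 *\<^sub>R u)"
      using h by simp
    have "dist (p + \<xi>1 *\<^sub>R u + \<eta>1 *\<^sub>R v) p < \<delta>1"
      using cl q1 unfolding m_def by fastforce
    then have a: "\<bar>c1 (p + \<xi>1 *\<^sub>R u + \<eta>1 *\<^sub>R v) - c1 p\<bar> < \<epsilon>"
      using de1 by (simp add: dist_real_def)
    have "dist (p + \<xi>2 *\<^sub>R v + \<eta>2 *\<^sub>R u) p < \<delta>2"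
      using cl2 q2 unfolding m_def by fastforce
    then have b: "\<bar>c2 (p + \<xi>2 *\<^sub>R v + \<eta>2 *\<^sub>R u) - c2 p\<bar> < \<epsilon>"
      using de2 by (simp add: dist_real_def)
    show ?thesis using a b eq by linarith
  qed
  note small = this
  have "c1 p = c2 p"
  proof (rule ccontr)
    assume "c1 p \<noteq> c2 p"
    then have "\<bar>c1 p - c2 p\<bar> / 2 > 0" by simp
    from small[OF this] show False by simp
  qed
  then show "DD (\<lambda>y. DD A y u) p v \<bullet> e = DD (\<lambda>y. DD A y v) p u \<bullet> e"
    unfolding c1_def c2_def by simp
qed



lemma lin_expand:
  fixes f :: "'a::euclidean_space \<Rightarrow> 'b::real_vector"
  assumes "linear f"
  shows "f u = (\<Sum>i\<in>Basis. (u \<bullet> i) *\<^sub>R f i)"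
proof -
  have "f u = f (\<Sum>i\<in>Basis. (u \<bullet> i) *\<^sub>R i)" by (simp add: euclidean_representation)
  also have "\<dots> = (\<Sum>i\<in>Basis. (u \<bullet> i) *\<^sub>R f i)"
    by (simp add: linear_sum[OF assms] linear_scale[OF assms])
  finally show ?thesis .
qed

lemma M_lin:
  fixes L :: "'a::euclidean_space \<Rightarrow> 'a \<Rightarrow> 'b::euclidean_space"
  assumes U: "open U" "p \<in> U" and lin: "\<forall>y\<in>U. linear (L y)"
    and dif: "\<forall>u. (\<lambda>y. L y u) differentiable (at p)"
  shows "DD (\<lambda>y. L y u) p w = (\<Sum>i\<in>Basis. (u \<bullet> i) *\<^sub>R DD (\<lambda>y. L y i) p w)"
proof -
  have h: "((\<lambda>y. \<Sum>i\<in>Basis. (u \<bullet> i) *\<^sub>R L y i) has_derivative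
      (\<lambda>w. \<Sum>i\<in>Basis. (u \<bullet> i) *\<^sub>R DD (\<lambda>y. L y i) p w)) (at p)"
    using dif by (intro has_derivative_sum has_derivative_scaleR_right DD_has) auto
  have h2: "((\<lambda>y. L y u) has_derivative
      (\<lambda>w. \<Sum>i\<in>Basis. (u \<bullet> i) *\<^sub>R DD (\<lambda>y. L y i) p w)) (at p)"
    apply (rule has_derivative_transform_within_open[OF h U])
    using lin lin_expand by metis
  show ?thesis using DD_eq[OF h2] .
qed

lemma apply_deriv:
  fixes L :: "'a::euclidean_space \<Rightarrow> 'a \<Rightarrow> 'b::euclidean_space"
  assumes U: "open U" "p \<in> U" and lin: "\<forall>y\<in>U. linear (L y)"
    and dif: "\<forall>u. (\<lambda>y. L y u) differentiable (at p)"
    and A: "(A has_derivative A') (at p)"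
  shows "((\<lambda>y. L y (A y)) has_derivative
      (\<lambda>w. DD (\<lambda>y. L y (A p)) p w + L p (A' w))) (at p)"
proof -
  have h: "((\<lambda>y. \<Sum>i\<in>Basis. (A y \<bullet> i) *\<^sub>R L y i) has_derivative
      (\<lambda>w. \<Sum>i\<in>Basis. (A p \<bullet> i) *\<^sub>R DD (\<lambda>y. L y i) p w + (A' w \<bullet> i) *\<^sub>R L p i)) (at p)"
    using dif A by (intro has_derivative_sum has_derivative_scaleR DD_has has_derivative_inner_left) auto
  have h2: "((\<lambda>y. L y (A y)) has_derivative
      (\<lambda>w. \<Sum>i\<in>Basis. (A p \<bullet> i) *\<^sub>R DD (\<lambda>y. L y i) p w + (A' w \<bullet> i) *\<^sub>R L p i)) (at p)"
    apply (rule has_derivative_transform_within_open[OF h U])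
    using lin lin_expand by metis
  have "(\<lambda>w. \<Sum>i\<in>Basis. (A p \<bullet> i) *\<^sub>R DD (\<lambda>y. L y i) p w + (A' w \<bullet> i) *\<^sub>R L p i)
      = (\<lambda>w. DD (\<lambda>y. L y (A p)) p w + L p (A' w))"
  proof
    fix w
    have "DD (\<lambda>y. L y (A p)) p w = (\<Sum>i\<in>Basis. (A p \<bullet> i) *\<^sub>R DD (\<lambda>y. L y i) p w)"
      by (rule M_lin[OF U lin dif])
    moreover have "L p (A' w) = (\<Sum>i\<in>Basis. (A' w \<bullet> i) *\<^sub>R L p i)"
      using lin U lin_expand by metis
    ultimately show "(\<Sum>i\<in>Basis. (A p \<bullet> i) *\<^sub>R DD (\<lambda>y. L y i) p w + (A' w \<bullet> i) *\<^sub>R L p i)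
      = DD (\<lambda>y. L y (A p)) p w + L p (A' w)"
      by (simp add: sum.distrib)
  qed
  then show ?thesis using h2 by simp
qed

definition Br :: "('a::euclidean_space \<Rightarrow> 'a) \<Rightarrow> ('a \<Rightarrow> 'a) \<Rightarrow> 'a \<Rightarrow> 'a" where
  "Br A C y = DD C y (A y) - DD A y (C y)"

definition VF :: "'a::euclidean_space set \<Rightarrow> ('a \<Rightarrow> 'a) \<Rightarrow> 'a \<Rightarrow> bool" where
  "VF U A p \<longleftrightarrow> open U \<and> p \<in> U \<and> (\<forall>x\<in>U. A differentiable (at x)) \<and>
     (\<forall>u. \<forall>x\<in>U. (\<lambda>y. DD A y u) differentiable (at x)) \<and>
     (\<forall>u v. isCont (\<lambda>y. DD (\<lambda>z. DD A z u) y v) p)"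

abbreviation M2 where "M2 A p u w \<equiv> DD (\<lambda>y. DD A y u) p w"

lemma VF_sym: "VF U A p \<Longrightarrow> M2 A p u v = M2 A p v u"
  unfolding VF_def using schwarz by blast

lemma VF_lin: "VF U A p \<Longrightarrow> linear (DD A p)"
  unfolding VF_def using DD_linear by blast

lemma Br_deriv:
  assumes A: "VF U A p" and C: "VF U C p"
  shows "(Br A C has_derivative
     (\<lambda>w. M2 C p (A p) w + DD C p (DD A p w) - (M2 A p (C p) w + DD A p (DD C p w)))) (at p)"
proof -
  have U: "open U" "p \<in> U" using A unfolding VF_def by auto
  have l1: "\<forall>y\<in>U. linear (DD C y)" using C unfolding VF_def using DD_linear by blast
  have l2: "\<forall>y\<in>U. linear (DD A y)" using A unfolding VF_def using DD_linear by blast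
  have f1: "\<forall>u. (\<lambda>y. DD C y u) differentiable (at p)" using C unfolding VF_def by auto
  have f2: "\<forall>u. (\<lambda>y. DD A y u) differentiable (at p)" using A unfolding VF_def by auto
  have hA: "(A has_derivative DD A p) (at p)" using A unfolding VF_def using DD_has by blast
  have hC: "(C has_derivative DD C p) (at p)" using C unfolding VF_def using DD_has by blast
  show ?thesis unfolding Br_def
    by (rule has_derivative_diff[OF apply_deriv[OF U l1 f1 hA] apply_deriv[OF U l2 f2 hC]])
qed

lemma Br_diff: "VF U A p \<Longrightarrow> VF U C p \<Longrightarrow> Br A C differentiable (at p)"
  using Br_deriv differentiableI by blast

lemma jacobi:
  assumes A: "VF U A p" and B: "VF U B p" and C: "VF U C p"
  shows "DD C p (Br A B p) - DD (Br A B) p (C p) + DD A p (Br B C p) - DD (Br B C) p (A p)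
       + DD B p (Br C A p) - DD (Br C A) p (B p) = 0"
proof -
  note e1 = DD_eq[OF Br_deriv[OF A B]] and e2 = DD_eq[OF Br_deriv[OF B C]]
    and e3 = DD_eq[OF Br_deriv[OF C A]]
  have la: "linear (DD A p)" and lb: "linear (DD B p)" and lc: "linear (DD C p)"
    using A B C VF_lin by blast+
  have s: "M2 A p (B p) (C p) = M2 A p (C p) (B p)" "M2 B p (A p) (C p) = M2 B p (C p) (A p)"
     "M2 C p (A p) (B p) = M2 C p (B p) (A p)"
    using A B C VF_sym by blast+
  show ?thesis
    unfolding e1 e2 e3 unfolding Br_def
    using s by (simp add: linear_diff[OF la] linear_diff[OF lb] linear_diff[OF lc] algebra_simps)
qed



lemma ext_VF:
  assumes "smooth_fun Y X" "p \<in> Y"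
  shows "\<exists>U g. VF U g p \<and> (\<forall>x\<in>U\<inter>Y. g x = X x)"
proof -
  obtain U g where g: "p \<in> U" "smooth_on U g" "\<forall>x\<in>U\<inter>Y. g x = X x"
    using assms unfolding smooth_fun_def by blast
  note sp = smooth_props[OF g(2)]
  have "VF U g p" unfolding VF_def using sp g(1)
    by (auto intro: differentiable_imp_continuous_within)
  then show ?thesis using g(3) by blast
qed

lemma ext_fun:
  assumes "smooth_fun Y f" "p \<in> Y"
  shows "\<exists>U g. open U \<and> p \<in> U \<and> (\<forall>x\<in>U. g differentiable (at x)) \<and> (\<forall>x\<in>U\<inter>Y. g x = f x)"
proof -
  obtain U g where g: "p \<in> U" "smooth_on U g" "\<forall>x\<in>U\<inter>Y. g x = f x"
    using assms unfolding smooth_fun_def by blast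
  note sp = smooth_props[OF g(2)]
  then show ?thesis using g by blast
qed

lemma VF_mono: "VF U g p \<Longrightarrow> open W \<Longrightarrow> p \<in> W \<Longrightarrow> W \<subseteq> U \<Longrightarrow> VF W g p"
  unfolding VF_def by blast

lemma VF_diff: "VF U g p \<Longrightarrow> x \<in> U \<Longrightarrow> g differentiable (at x)"
  unfolding VF_def by blast

lemma dir_deriv_ext:
  fixes F :: "'a::euclidean_space \<Rightarrow> 'b::real_normed_vector"
  assumes sf: "smooth_fun Y F" and x: "x \<in> Y" and W: "open W" "x \<in> W"
    and Fd: "Fe differentiable (at x)" and agree: "\<forall>y\<in>W\<inter>Y. Fe y = F y"
    and v: "v \<in> tangent_space Y x"
  shows "dir_deriv Y F x v = DD Fe x v"
proof -
  have ex: "\<exists>g. \<exists>U. x \<in> U \<and> smooth_on U g \<and> (\<forall>y\<in>U \<inter> Y. g y = F y)"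
    using sf x unfolding smooth_fun_def by blast
  define g where "g = (SOME g. \<exists>U. x \<in> U \<and> smooth_on U g \<and> (\<forall>y\<in>U \<inter> Y. g y = F y))"
  obtain U where U: "x \<in> U" "smooth_on U g" "\<forall>y\<in>U \<inter> Y. g y = F y"
    using someI_ex[OF ex] unfolding g_def by blast
  note sp = smooth_props[OF U(2)]
  have "DD g x v = DD Fe x v"
    apply (rule tan_deriv_eq[where W="U \<inter> W" and M=Y])
    using sp U W Fd agree v by auto
  then show ?thesis unfolding dir_deriv_def g_def .
qed

lemma bracket_local:
  assumes vA: "vector_field Y A" and vC: "vector_field Y C" and x: "x \<in> Y"
    and W: "open W" "x \<in> W"
    and Ad: "Ae differentiable (at x)" and Cd: "Ce differentiable (at x)"
    and aA: "\<forall>y\<in>W\<inter>Y. Ae y = A y" and aC: "\<forall>y\<in>W\<inter>Y. Ce y = C y"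
  shows "lie_bracket Y A C x = Br Ae Ce x"
proof -
  have tA: "A x \<in> tangent_space Y x" and tC: "C x \<in> tangent_space Y x"
    using vA vC x unfolding vector_field_def by auto
  have sA: "smooth_fun Y A" and sC: "smooth_fun Y C" using vA vC unfolding vector_field_def by auto
  have "Ae x = A x" "Ce x = C x" using aA aC x W by auto
  then show ?thesis unfolding lie_bracket_def Br_def
    using dir_deriv_ext[OF sC x W Cd aC tA] dir_deriv_ext[OF sA x W Ad aA tC] by simp
qed



lemma key:
  fixes Y :: "'a::euclidean_space set"
  assumes sal: "smooth_fun Y \<alpha>" and reeb: "reeb_field Y \<alpha> R"
    and fr: "contact_canonical_frame Y \<alpha> R X1 X2 I J K"
    and J0: "\<forall>p\<in>Y. J p = 0" and p: "p \<in> Y"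
    and UK: "open UK" "p \<in> UK" and kd: "\<forall>x\<in>UK. gK differentiable (at x)"
    and kag: "\<forall>x\<in>UK\<inter>Y. gK x = K x"
  shows "DD gK p (X2 p) = - (I p * K p)"
proof -
  have vX1: "vector_field Y X1" and vX2: "vector_field Y X2" and sI: "smooth_fun Y I"
    and rel: "\<forall>p\<in>Y. \<alpha> p \<bullet> X1 p = 0 \<and> \<alpha> p \<bullet> X2 p = 0 \<and>
        lie_bracket Y X2 R p = X1 p \<and>
        lie_bracket Y X1 X2 p = R p + I p *\<^sub>R X1 p + J p *\<^sub>R X2 p \<and>
        lie_bracket Y R X1 p = K p *\<^sub>R X2 p"
    using fr unfolding contact_canonical_frame_def by auto
  have vR: "vector_field Y R" and aR: "\<forall>p\<in>Y. \<alpha> p \<bullet> R p = 1"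
    using reeb unfolding reeb_field_def by auto
  obtain U1 a1 where a1: "VF U1 a1 p" "\<forall>x\<in>U1\<inter>Y. a1 x = X1 x"
    using ext_VF[OF _ p] vX1 unfolding vector_field_def by blast
  obtain U2 a2 where a2: "VF U2 a2 p" "\<forall>x\<in>U2\<inter>Y. a2 x = X2 x"
    using ext_VF[OF _ p] vX2 unfolding vector_field_def by blast
  obtain UR r where r: "VF UR r p" "\<forall>x\<in>UR\<inter>Y. r x = R x"
    using ext_VF[OF _ p] vR unfolding vector_field_def by blast
  obtain UI i where i: "open UI" "p \<in> UI" "\<forall>x\<in>UI. i differentiable (at x)" "\<forall>x\<in>UI\<inter>Y. i x = I x"
    using ext_fun[OF sI p] by blast
  obtain Ua al where al: "open Ua" "p \<in> Ua" "\<forall>x\<in>Ua. al differentiable (at x)" "\<forall>x\<in>Ua\<inter>Y. al x = \<alpha> x"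
    using ext_fun[OF sal p] by blast
  define W where "W = U1 \<inter> U2 \<inter> UR \<inter> UI \<inter> Ua \<inter> UK"
  have oW: "open W" and pW: "p \<in> W"
    unfolding W_def using a1 a2 r i al UK unfolding VF_def by (auto intro!: open_Int)
  have Wsub: "W \<subseteq> U1" "W \<subseteq> U2" "W \<subseteq> UR" "W \<subseteq> UI" "W \<subseteq> Ua" "W \<subseteq> UK"
    unfolding W_def by auto
  have V1: "VF W a1 p" using VF_mono[OF a1(1) oW pW Wsub(1)] .
  have V2: "VF W a2 p" using VF_mono[OF a2(1) oW pW Wsub(2)] .
  have VR: "VF W r p" using VF_mono[OF r(1) oW pW Wsub(3)] .
  have d1: "\<forall>x\<in>W. a1 differentiable (at x)" using V1 VF_diff by blast
  have d2: "\<forall>x\<in>W. a2 differentiable (at x)" using V2 VF_diff by blast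
  have dr: "\<forall>x\<in>W. r differentiable (at x)" using VR VF_diff by blast
  have di: "\<forall>x\<in>W. i differentiable (at x)" using i(3) Wsub by blast
  have dal: "\<forall>x\<in>W. al differentiable (at x)" using al(3) Wsub by blast
  have dk: "\<forall>x\<in>W. gK differentiable (at x)" using kd Wsub by blast
  have g1: "\<forall>x\<in>W\<inter>Y. a1 x = X1 x" using a1(2) Wsub by blast
  have g2: "\<forall>x\<in>W\<inter>Y. a2 x = X2 x" using a2(2) Wsub by blast
  have gr: "\<forall>x\<in>W\<inter>Y. r x = R x" using r(2) Wsub by blast
  have gi: "\<forall>x\<in>W\<inter>Y. i x = I x" using i(4) Wsub by blast
  have gal: "\<forall>x\<in>W\<inter>Y. al x = \<alpha> x" using al(4) Wsub by blast
  have gk: "\<forall>x\<in>W\<inter>Y. gK x = K x" using kag Wsub by blast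
  have E1: "\<forall>x\<in>W\<inter>Y. Br a2 r x = a1 x"
  proof
    fix x assume x: "x \<in> W \<inter> Y"
    have "lie_bracket Y X2 R x = Br a2 r x"
      apply (rule bracket_local[OF vX2 vR _ oW _ _ _ g2 gr]) using x d2 dr by auto
    then show "Br a2 r x = a1 x" using rel g1 x by auto
  qed
  have E2: "\<forall>x\<in>W\<inter>Y. Br a1 a2 x = r x + i x *\<^sub>R a1 x"
  proof
    fix x assume x: "x \<in> W \<inter> Y"
    have "lie_bracket Y X1 X2 x = Br a1 a2 x"
      apply (rule bracket_local[OF vX1 vX2 _ oW _ _ _ g1 g2]) using x d1 d2 by auto
    then show "Br a1 a2 x = r x + i x *\<^sub>R a1 x" using rel g1 gr gi J0 x by auto
  qed
  have E3: "\<forall>x\<in>W\<inter>Y. Br r a1 x = gK x *\<^sub>R a2 x"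
  proof
    fix x assume x: "x \<in> W \<inter> Y"
    have "lie_bracket Y R X1 x = Br r a1 x"
      apply (rule bracket_local[OF vR vX1 _ oW _ _ _ gr g1]) using x dr d1 by auto
    then show "Br r a1 x = gK x *\<^sub>R a2 x" using rel g2 gk x by auto
  qed
  have A1: "\<forall>x\<in>W\<inter>Y. al x \<bullet> a1 x = 0" using rel g1 gal by auto
  have A2: "\<forall>x\<in>W\<inter>Y. al x \<bullet> a2 x = 0" using rel g2 gal by auto
  have pWY: "p \<in> W \<inter> Y" using pW p by auto
  have aRp: "al p \<bullet> r p = 1" using aR gal gr pWY by auto
  have t1: "a1 p \<in> tangent_space Y p" using vX1 g1 pWY unfolding vector_field_def by auto
  have t2: "a2 p \<in> tangent_space Y p" using vX2 g2 pWY unfolding vector_field_def by auto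
  have tr: "r p \<in> tangent_space Y p" using vR gr pWY unfolding vector_field_def by auto
  have D1: "DD (Br a2 r) p (a1 p) = DD a1 p (a1 p)"
    using tan_deriv_eq[OF oW pW E1 Br_diff[OF V2 VR] _ t1] d1 pW by blast
  have hk: "((\<lambda>x. gK x *\<^sub>R a2 x) has_derivative
      (\<lambda>h. gK p *\<^sub>R DD a2 p h + DD gK p h *\<^sub>R a2 p)) (at p)"
    using dk d2 pW by (intro has_derivative_scaleR DD_has) auto
  have D3: "DD (Br r a1) p (a2 p) = gK p *\<^sub>R DD a2 p (a2 p) + DD gK p (a2 p) *\<^sub>R a2 p"
    using tan_deriv_eq[OF oW pW E3 Br_diff[OF VR V1] differentiableI[OF hk] t2] DD_eq[OF hk]
    by simp
  have hi: "((\<lambda>x. r x + i x *\<^sub>R a1 x) has_derivative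
      (\<lambda>h. DD r p h + (i p *\<^sub>R DD a1 p h + DD i p h *\<^sub>R a1 p))) (at p)"
    using dr di d1 pW by (intro has_derivative_add has_derivative_scaleR DD_has) auto
  have D2: "DD (Br a1 a2) p (r p) = DD r p (r p) + (i p *\<^sub>R DD a1 p (r p) + DD i p (r p) *\<^sub>R a1 p)"
    using tan_deriv_eq[OF oW pW E2 Br_diff[OF V1 V2] differentiableI[OF hi] tr] DD_eq[OF hi]
    by simp
  have Jac: "DD a1 p (Br a2 r p) - DD (Br a2 r) p (a1 p) + DD a2 p (Br r a1 p) - DD (Br r a1) p (a2 p)
       + DD r p (Br a1 a2 p) - DD (Br a1 a2) p (r p) = 0"
    by (rule jacobi[OF V2 VR V1])
  have B1: "Br a2 r p = a1 p" and B2: "Br a1 a2 p = r p + i p *\<^sub>R a1 p"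
    and B3: "Br r a1 p = gK p *\<^sub>R a2 p"
    using E1 E2 E3 pWY by auto
  have B3': "DD r p (a1 p) = DD a1 p (r p) - gK p *\<^sub>R a2 p"
    using B3 unfolding Br_def by (simp add: algebra_simps)
  have l2: "linear (DD a2 p)" and lr: "linear (DD r p)" and l1: "linear (DD a1 p)"
    using V1 V2 VR VF_lin by blast+
  define c where "c = DD gK p (a2 p) + i p * gK p"
  define d where "d = DD i p (r p)"
  have "c *\<^sub>R a2 p + d *\<^sub>R a1 p =
      - (DD a1 p (Br a2 r p) - DD (Br a2 r) p (a1 p) + DD a2 p (Br r a1 p) - DD (Br r a1) p (a2 p)
       + DD r p (Br a1 a2 p) - DD (Br a1 a2) p (r p))"
    unfolding D1 D2 D3 B1 B2 B3 c_def d_def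
    by (simp add: linear_add[OF lr] linear_scale[OF lr] linear_scale[OF l2] B3' algebra_simps)
  then have star: "c *\<^sub>R a2 p + d *\<^sub>R a1 p = 0" using Jac by simp
  have lal: "linear (DD al p)" using DD_linear dal pW by blast
  have hA2: "((\<lambda>x. al x \<bullet> a2 x) has_derivative (\<lambda>h. al p \<bullet> DD a2 p h + DD al p h \<bullet> a2 p)) (at p)"
    using dal d2 pW by (intro has_derivative_inner DD_has) auto
  have hA1: "((\<lambda>x. al x \<bullet> a1 x) has_derivative (\<lambda>h. al p \<bullet> DD a1 p h + DD al p h \<bullet> a1 p)) (at p)"
    using dal d1 pW by (intro has_derivative_inner DD_has) auto
  have F1: "al p \<bullet> DD a2 p (a1 p) + DD al p (a1 p) \<bullet> a2 p = 0"
    using tan_deriv_zero[OF oW pW A2 differentiableI[OF hA2] t1] DD_eq[OF hA2] by simp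
  have F2: "al p \<bullet> DD a1 p (a2 p) + DD al p (a2 p) \<bullet> a1 p = 0"
    using tan_deriv_zero[OF oW pW A1 differentiableI[OF hA1] t2] DD_eq[OF hA1] by simp
  have "DD a2 p (a1 p) - DD a1 p (a2 p) = r p + i p *\<^sub>R a1 p"
    using B2 unfolding Br_def .
  then have "al p \<bullet> (DD a2 p (a1 p) - DD a1 p (a2 p)) = al p \<bullet> (r p + i p *\<^sub>R a1 p)" by simp
  then have F3: "al p \<bullet> DD a2 p (a1 p) - al p \<bullet> DD a1 p (a2 p) = 1"
    using aRp A1 pWY by (simp add: inner_diff_right inner_add_right)
  have "DD al p (a1 p) \<bullet> (c *\<^sub>R a2 p + d *\<^sub>R a1 p) - DD al p (c *\<^sub>R a2 p + d *\<^sub>R a1 p) \<bullet> a1 p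
     = c * (DD al p (a1 p) \<bullet> a2 p - DD al p (a2 p) \<bullet> a1 p)"
    by (simp add: linear_add[OF lal] linear_scale[OF lal] inner_add_right inner_add_left algebra_simps)
  also have "\<dots> = - c"
  proof -
    have "DD al p (a1 p) \<bullet> a2 p - DD al p (a2 p) \<bullet> a1 p = -1" using F1 F2 F3 by linarith
    then show ?thesis by simp
  qed
  finally have "- c = 0" using star linear_0[OF lal] by simp
  then have "c = 0" by simp
  then show ?thesis unfolding c_def using g2 gi gk pWY by auto
qed



lemma comp_deriv:
  fixes f :: "'a::euclidean_space \<Rightarrow> real"
  assumes U: "open U" "\<psi> t \<in> U" and gd: "g differentiable (at (\<psi> t))"
    and ag: "\<forall>x\<in>U\<inter>Y. g x = f x" and inY: "\<forall>s. \<psi> s \<in> Y"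
    and vd: "(\<psi> has_vector_derivative v) (at t)"
  shows "((\<lambda>s. f (\<psi> s)) has_real_derivative DD g (\<psi> t) v) (at t)"
proof -
  have pd: "(\<psi> has_derivative (\<lambda>h. h *\<^sub>R v)) (at t)"
    using vd unfolding has_vector_derivative_def .
  have c: "((\<lambda>s. g (\<psi> s)) has_derivative (\<lambda>h. DD g (\<psi> t) (h *\<^sub>R v))) (at t)"
    using has_derivative_compose[OF pd DD_has[OF gd]] by simp
  have "isCont \<psi> t" using vd by (simp add: has_vector_derivative_continuous)
  obtain e where e: "e > 0" "ball (\<psi> t) e \<subseteq> U" using U by (meson openE)
  obtain d where d: "d > 0" "\<forall>s. dist s t < d \<longrightarrow> dist (\<psi> s) (\<psi> t) < e"
    using \<open>isCont \<psi> t\<close> e(1) unfolding continuous_at_eps_delta by blast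
  have c2: "((\<lambda>s. f (\<psi> s)) has_derivative (\<lambda>h. DD g (\<psi> t) (h *\<^sub>R v))) (at t)"
    apply (rule has_derivative_transform_within[OF c d(1)])
    using d(2) e(2) ag inY by (auto simp: dist_commute subset_iff)
  have lin: "linear (DD g (\<psi> t))" using DD_linear[OF gd] .
  show ?thesis
    apply (rule has_derivative_imp_has_field_derivative[OF c2])
    using lin by (simp add: linear_scale)
qed

lemma integral_deriv:
  fixes g :: "real \<Rightarrow> real"
  assumes cg: "\<forall>t. isCont g t"
  shows "((\<lambda>u. LBINT \<tau>=0..u. g \<tau>) has_real_derivative g t) (at t)"
proof -
  define a where "a = min 0 t - 1"
  define b where "b = max 0 t + 1"
  have ab: "a \<le> 0" "0 \<le> b" "a \<le> t" "t \<le> b" unfolding a_def b_def by auto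
  have co: "continuous_on {a..b} g" using cg by (simp add: continuous_at_imp_continuous_on)
  have "((\<lambda>u. LBINT \<tau>=0..u. g \<tau>) has_vector_derivative g t) (at t within {a..b})"
    using interval_integral_FTC2[OF ab(1,2) co ab(3,4)] by (simp add: zero_ereal_def)
  moreover have "t \<in> interior {a..b}" unfolding a_def b_def by auto
  ultimately have "((\<lambda>u. LBINT \<tau>=0..u. g \<tau>) has_vector_derivative g t) (at t)"
    using at_within_interior by metis
  then show ?thesis using has_real_derivative_iff_has_vector_derivative by blast
qed

lemma ode_solution:
  fixes f g :: "real \<Rightarrow> real"
  assumes df: "\<forall>t. (f has_real_derivative - (g t * f t)) (at t)" and cg: "\<forall>t. isCont g t"
  shows "f t = f 0 * exp (- (LBINT \<tau>=0..t. g \<tau>))"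
proof -
  define G where "G u = (LBINT \<tau>=0..u. g \<tau>)" for u :: real
  have dG: "(G has_real_derivative g u) (at u)" for u
    unfolding G_def using integral_deriv[OF cg] .
  define h where "h u = f u * exp (G u)" for u
  have "(h has_real_derivative 0) (at u)" for u
  proof -
    have "(h has_real_derivative (- (g u * f u)) * exp (G u) + f u * (exp (G u) * g u)) (at u)"
      unfolding h_def using df dG by (auto intro!: derivative_eq_intros)
    then show ?thesis by (simp add: algebra_simps)
  qed
  then have "h t = h 0" using DERIV_isconst_all by blast
  moreover have "G 0 = 0" unfolding G_def by (metis interval_integral_endpoints_same zero_ereal_def)
  ultimately have "f t * exp (G t) = f 0" unfolding h_def by simp
  then have "f t = f 0 * exp (- G t)"
    by (metis exp_minus_inverse mult.assoc mult.right_neutral)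
  then show ?thesis unfolding G_def .
qed


theorem theorem1p9:
  fixes Y :: "'a::euclidean_space set"
    and \<alpha> R X1 X2 :: "'a \<Rightarrow> 'a"
    and I J K :: "'a \<Rightarrow> real"
  assumes "closed_manifold 3 Y"
    and "contact_form Y \<alpha>"
    and "reeb_field Y \<alpha> R"
    and "contact_canonical_frame Y \<alpha> R X1 X2 I J K"
    and "\<forall>p\<in>Y. J p = 0"
  shows "(\<forall>\<psi>. flow_line Y X2 \<psi> \<longrightarrow>
            (\<forall>t. K (\<psi> t) = K (\<psi> 0) * exp (- (LBINT \<tau>=0..t. I (\<psi> \<tau>)))))
       \<and> (\<forall>y T. T > 0 \<and> (\<forall>t. y (t + T) = y t) \<and> flow_line Y X2 y \<and>
            K (y T) = K (y 0) \<and> K (y 0) \<noteq> 0 \<longrightarrow> (LBINT \<tau>=0..T. I (y \<tau>)) = 0)"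
proof -
  have sal: "smooth_fun Y \<alpha>" using assms(2) unfolding contact_form_def by blast
  have sI: "smooth_fun Y I" and sK: "smooth_fun Y K"
    using assms(4) unfolding contact_canonical_frame_def by auto
  have P1: "\<forall>t. K (\<psi> t) = K (\<psi> 0) * exp (- (LBINT \<tau>=0..t. I (\<psi> \<tau>)))"
    if fl: "flow_line Y X2 \<psi>" for \<psi>
  proof -
    have inY: "\<forall>s. \<psi> s \<in> Y" and vd: "\<And>s. (\<psi> has_vector_derivative X2 (\<psi> s)) (at s)"
      using fl unfolding flow_line_def by auto
    have dK: "((\<lambda>s. K (\<psi> s)) has_real_derivative - (I (\<psi> t) * K (\<psi> t))) (at t)" for t
    proof -
      obtain U g where g: "open U" "\<psi> t \<in> U" "\<forall>x\<in>U. g differentiable (at x)" "\<forall>x\<in>U\<inter>Y. g x = K x"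
        using ext_fun[OF sK, of "\<psi> t"] inY by blast
      have "((\<lambda>s. K (\<psi> s)) has_real_derivative DD g (\<psi> t) (X2 (\<psi> t))) (at t)"
        using comp_deriv[OF g(1,2) _ g(4) inY vd] g(2,3) by blast
      moreover have "DD g (\<psi> t) (X2 (\<psi> t)) = - (I (\<psi> t) * K (\<psi> t))"
        using key[OF sal assms(3) assms(4) assms(5) _ g(1,2,3,4)] inY by blast
      ultimately show ?thesis by simp
    qed
    have cI: "isCont (\<lambda>s. I (\<psi> s)) t" for t
    proof -
      obtain U g where g: "open U" "\<psi> t \<in> U" "\<forall>x\<in>U. g differentiable (at x)" "\<forall>x\<in>U\<inter>Y. g x = I x"
        using ext_fun[OF sI, of "\<psi> t"] inY by blast
      have "((\<lambda>s. I (\<psi> s)) has_real_derivative DD g (\<psi> t) (X2 (\<psi> t))) (at t)"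
        using comp_deriv[OF g(1,2) _ g(4) inY vd] g(2,3) by blast
      then show ?thesis by (rule DERIV_isCont)
    qed
    show ?thesis
      using ode_solution[of "\<lambda>s. K (\<psi> s)" "\<lambda>s. I (\<psi> s)"] dK cI by blast
  qed
  have P2: "(LBINT \<tau>=0..T. I (y \<tau>)) = 0"
    if h: "T > 0" "\<forall>t. y (t + T) = y t" "flow_line Y X2 y" "K (y T) = K (y 0)" "K (y 0) \<noteq> 0" for y T
  proof -
    have "K (y T) = K (y 0) * exp (- (LBINT \<tau>=0..T. I (y \<tau>)))" using P1[OF h(3)] by blast
    then have "exp (- (LBINT \<tau>=0..T. I (y \<tau>))) = 1" using h(4,5) by simp
    then show ?thesis by simp
  qed
  show ?thesis using P1 P2 by blast
qed

end
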